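(* Let $X$ be a nonempty set, $F:X\rightrightarrows Y$ with $F(x)\in\mathcal P^0_{\mp C}(Y)$ for all $x$, $\mp C$-closed and $\mp C$-bounded valued, let $e\in-\mathrm{int}(C)$, and assume $v_e(F(x))\neq v_e(F(y))$ for all $x,y\in X$ with $x\neq y$. If $x_0\in X$ is a maximal (resp. minimal) solution of the vector problem of maximizing (resp. minimizing) $v_e(F(x))$ over $x\in X$, then $x_0$ is an $s$-maximal (resp. $s$-minimal) solution of $(s\text{-}SOP)$.
   Context: $Y$ is a real topological linear space and $C\subset Y$ is a convex, closed, pointed cone with nonempty interior. $\mathbb R^2$ is ordered by $\mathbb R^2_+$. $\mathcal P^0_{\mp C}(Y)$ is the family of nonempty $A\subset Y$ with $A+C\neq Y$ and $A-C\neq Y$. $C$-closed: $A+C$ closed; $C$-bounded: for every neighborhood $U$ of $0$ there is $t>0$ with $A\subset tU+C$; $\mp C$-closed/bounded: holds for $C$ and $-C$. $A\preceq^s B$ iff $B\subset A+C$ and $A\subset B-C$. $x_0$ is an $s$-maximal (minimal) solution of $(s\text{-}SOP)$ if for every $x\in X$, $F(x_0)\preceq^sF(x)$ implies $F(x)\preceq^sF(x_0)$ (resp. $F(x)\preceq^sF(x_0)$ implies $F(x_0)\preceq^sF(x)$). For $e\in-\mathrm{int}(C)$: $\phi_{e,A}(y)=\inf\{t\in\mathbb R: y\in te+A+C\}$; $G^\ell_e(A,B)=\sup_{b\in B}\phi_{e,A}(b)$; $G^u_e(B,A):=-G^\ell_e(-B,-A)$; $v_e(A)=\big(-G^\ell_e(\{0\},A),\,G^u_e(A,\{0\})\big)$.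 For $f:X\to\mathbb R^2$, $\bar x$ is a maximal solution of $\max f$ if there is no $x$ with $f(\bar x)\le_{\mathbb R^2_+}f(x)$, $f(x)\ne f(\bar x)$; a minimal solution of $\min f$ if there is no $x$ with $f(x)\le_{\mathbb R^2_+}f(\bar x)$, $f(x)\ne f(\bar x)$. *)

theory Defs
  imports "HOL-Analysis.Analysis"
begin

definition topological_linear_space :: "('y::{real_vector,topological_space}) itself \<Rightarrow> bool" where
  "topological_linear_space _ \<longleftrightarrow>
     continuous_on UNIV (\<lambda>p::'y \<times> 'y. fst p + snd p) \<and>
     continuous_on UNIV (\<lambda>p::real \<times> 'y. fst p *\<^sub>R snd p)"

definition msum :: "'y::real_vector set \<Rightarrow> 'y set \<Rightarrow> 'y set" where
  "msum A B = {a + b | a b. a \<in> A \<and> b \<in> B}"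

definition mdiff :: "'y::real_vector set \<Rightarrow> 'y set \<Rightarrow> 'y set" where
  "mdiff A B = {a - b | a b. a \<in> A \<and> b \<in> B}"

definition P0 :: "'y::real_vector set \<Rightarrow> 'y set set" where
  "P0 C = {A. A \<noteq> {} \<and> msum A C \<noteq> UNIV \<and> mdiff A C \<noteq> UNIV}"

definition mpC_closed :: "'y::{real_vector,topological_space} set \<Rightarrow> 'y set \<Rightarrow> bool" where
  "mpC_closed C A \<longleftrightarrow> closed (msum A C) \<and> closed (mdiff A C)"

definition neighborhood0 :: "'y::{real_vector,topological_space} set \<Rightarrow> bool" where
  "neighborhood0 U \<longleftrightarrow> (\<exists>V. open V \<and> 0 \<in> V \<and> V \<subseteq> U)"

definition mpC_bounded :: "'y::{real_vector,topological_space} set \<Rightarrow> 'y set \<Rightarrow> bool" where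
  "mpC_bounded C A \<longleftrightarrow>
     (\<forall>U. neighborhood0 U \<longrightarrow> (\<exists>t>0. A \<subseteq> msum ((\<lambda>u. t *\<^sub>R u) ` U) C)) \<and>
     (\<forall>U. neighborhood0 U \<longrightarrow> (\<exists>t>0. A \<subseteq> mdiff ((\<lambda>u. t *\<^sub>R u) ` U) C))"

definition set_less_s :: "'y::real_vector set \<Rightarrow> 'y set \<Rightarrow> 'y set \<Rightarrow> bool" where
  "set_less_s C A B \<longleftrightarrow> B \<subseteq> msum A C \<and> A \<subseteq> mdiff B C"

definition s_maximal :: "'y::real_vector set \<Rightarrow> 'x set \<Rightarrow> ('x \<Rightarrow> 'y set) \<Rightarrow> 'x \<Rightarrow> bool" where
  "s_maximal C X F x0 \<longleftrightarrow> x0 \<in> X \<and>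
     (\<forall>x\<in>X. set_less_s C (F x0) (F x) \<longrightarrow> set_less_s C (F x) (F x0))"

definition s_minimal :: "'y::real_vector set \<Rightarrow> 'x set \<Rightarrow> ('x \<Rightarrow> 'y set) \<Rightarrow> 'x \<Rightarrow> bool" where
  "s_minimal C X F x0 \<longleftrightarrow> x0 \<in> X \<and>
     (\<forall>x\<in>X. set_less_s C (F x) (F x0) \<longrightarrow> set_less_s C (F x0) (F x))"

text \<open>Scalarization functional (extended-real valued, inf of the empty set is \<open>+\<infinity>\<close>).\<close>
definition phi :: "'y::real_vector set \<Rightarrow> 'y \<Rightarrow> 'y set \<Rightarrow> 'y \<Rightarrow> ereal" where
  "phi C e A y = Inf {ereal t | t. y \<in> msum ((\<lambda>a. t *\<^sub>R e + a) ` A) C}"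

definition Gl :: "'y::real_vector set \<Rightarrow> 'y \<Rightarrow> 'y set \<Rightarrow> 'y set \<Rightarrow> ereal" where
  "Gl C e A B = (SUP b\<in>B. phi C e A b)"

definition Gu :: "'y::real_vector set \<Rightarrow> 'y \<Rightarrow> 'y set \<Rightarrow> 'y set \<Rightarrow> ereal" where
  "Gu C e B A = - Gl C e (uminus ` B) (uminus ` A)"

definition ve :: "'y::real_vector set \<Rightarrow> 'y \<Rightarrow> 'y set \<Rightarrow> ereal \<times> ereal" where
  "ve C e A = (- Gl C e {0} A, Gu C e A {0})"

definition le2 :: "ereal \<times> ereal \<Rightarrow> ereal \<times> ereal \<Rightarrow> bool" where
  "le2 p q \<longleftrightarrow> fst p \<le> fst q \<and> snd p \<le> snd q"

definition vec_maximal :: "'x set \<Rightarrow> ('x \<Rightarrow> ereal \<times> ereal) \<Rightarrow> 'x \<Rightarrow> bool" where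
  "vec_maximal X f x0 \<longleftrightarrow> x0 \<in> X \<and> \<not> (\<exists>x\<in>X. le2 (f x0) (f x) \<and> f x \<noteq> f x0)"

definition vec_minimal :: "'x set \<Rightarrow> ('x \<Rightarrow> ereal \<times> ereal) \<Rightarrow> 'x \<Rightarrow> bool" where
  "vec_minimal X f x0 \<longleftrightarrow> x0 \<in> X \<and> \<not> (\<exists>x\<in>X. le2 (f x) (f x0) \<and> f x \<noteq> f x0)"

end

theory Submission
  imports Defs
begin

lemma cone_add:
  assumes "convex C" "cone C" "a \<in> C" "b \<in> C"
  shows "a + b \<in> C"
proof -
  have "(1/2) *\<^sub>R a + (1/2) *\<^sub>R b \<in> C"
    using assms(1,3,4) unfolding convex_def by (metis add_divide_distrib divide_self_if one_add_one zero_le_divide_1_iff zero_le_numeral zero_neq_numeral)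
  hence "2 *\<^sub>R ((1/2) *\<^sub>R a + (1/2) *\<^sub>R b) \<in> C" using assms(2) unfolding cone_def by auto
  thus ?thesis by (simp add: scaleR_add_right)
qed

lemma mono_ve:
  assumes cvx: "convex C" and cn: "cone C" and le: "set_less_s C A B"
  shows "le2 (ve C e A) (ve C e B)"
proof -
  have add: "\<And>a b. a \<in> C \<Longrightarrow> b \<in> C \<Longrightarrow> a + b \<in> C" using cone_add[OF cvx cn] by blast
  have BA: "B \<subseteq> msum A C" and AB: "A \<subseteq> mdiff B C" using le unfolding set_less_s_def by auto
  have p1: "phi C e {0} b \<le> Gl C e {0} A" if "b \<in> B" for b
  proof -
    obtain a c where a: "a \<in> A" "c \<in> C" "b = a + c" using BA \<open>b \<in> B\<close> unfolding msum_def by auto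
    have "phi C e {0} b \<le> phi C e {0} a"
      unfolding phi_def
    proof (rule Inf_superset_mono, safe)
      fix t assume "a \<in> msum ((\<lambda>a. t *\<^sub>R e + a) ` {0}) C"
      then obtain c' where "c' \<in> C" "a = t *\<^sub>R e + c'" unfolding msum_def by auto
      hence "b = (t *\<^sub>R e + 0) + (c' + c)" using a by simp
      moreover have "c' + c \<in> C" using add \<open>c' \<in> C\<close> a by blast
      ultimately show "\<exists>t'. ereal t = ereal t' \<and> b \<in> msum ((\<lambda>a. t' *\<^sub>R e + a) ` {0}) C"
        unfolding msum_def by blast
    qed
    also have "\<dots> \<le> Gl C e {0} A" unfolding Gl_def using a by (auto intro: SUP_upper)
    finally show ?thesis .
  qed
  have g1: "Gl C e {0} B \<le> Gl C e {0} A" unfolding Gl_def[of C e "{0}" B] using p1 by (auto intro: SUP_least)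
  have g2: "phi C e (uminus ` B) 0 \<le> phi C e (uminus ` A) 0"
    unfolding phi_def
  proof (rule Inf_superset_mono, safe)
    fix t assume "0 \<in> msum ((\<lambda>a. t *\<^sub>R e + a) ` uminus ` A) C"
    then obtain a c where ac: "a \<in> A" "c \<in> C" "0 = t *\<^sub>R e + - a + c" unfolding msum_def by auto
    obtain b c' where bc: "b \<in> B" "c' \<in> C" "a = b - c'" using AB ac(1) unfolding mdiff_def by auto
    have "0 = (t *\<^sub>R e + - b) + (c' + c)" using ac bc by (simp add: algebra_simps)
    moreover have "c' + c \<in> C" using add ac bc by blast
    ultimately show "\<exists>t'. ereal t = ereal t' \<and> 0 \<in> msum ((\<lambda>a. t' *\<^sub>R e + a) ` uminus ` B) C"
      unfolding msum_def using bc(1) by blast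
  qed
  show ?thesis using g1 g2 unfolding le2_def ve_def Gu_def Gl_def by (simp add: ereal_uminus_le_reorder)
qed

lemma refl_s:
  assumes "0 \<in> C" shows "set_less_s C A A"
  unfolding set_less_s_def msum_def mdiff_def using assms by force

theorem theorem9:
  fixes X :: "'x set" and F :: "'x \<Rightarrow> 'y::{real_vector,topological_space} set"
    and C :: "'y set" and e :: 'y and x0 :: 'x
  assumes tvs: "topological_linear_space TYPE('y)"
    and C_convex: "convex C" and C_closed: "closed C" and C_cone: "cone C"
    and C_pointed: "C \<inter> uminus ` C = {0}" and C_int: "interior C \<noteq> {}"
    and X_ne: "X \<noteq> {}"
    and F_P0: "\<forall>x\<in>X. F x \<in> P0 C"
    and F_closed: "\<forall>x\<in>X. mpC_closed C (F x)"
    and F_bounded: "\<forall>x\<in>X. mpC_bounded C (F x)"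
    and e_in: "e \<in> uminus ` interior C"
    and v_inj: "\<forall>x\<in>X. \<forall>y\<in>X. x \<noteq> y \<longrightarrow> ve C e (F x) \<noteq> ve C e (F y)"
  shows "(vec_maximal X (\<lambda>x. ve C e (F x)) x0 \<longrightarrow> s_maximal C X F x0) \<and>
         (vec_minimal X (\<lambda>x. ve C e (F x)) x0 \<longrightarrow> s_minimal C X F x0)"
proof -
  have z: "0 \<in> C" using C_pointed by blast
  show ?thesis
    unfolding vec_maximal_def vec_minimal_def s_maximal_def s_minimal_def
    using mono_ve[OF C_convex C_cone] refl_s[OF z] v_inj by metis
qed

end
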